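(* Let $\{x_i\}_{i\in[N]}$ be the global solution of the delayed consensus system described in the context. Then for all $K\in\mathbb{N}$, \[ \Delta^K_x\le\Delta^0_x+(1+\sigma)\Delta^{K-1}_x+\sigma\sum_{k=0}^{K-1}\Delta^k_x. \]
   Context: Let $N\ge2$, $d\ge1$ be integers, $[N]=\{1,\dots,N\}$, $0\le\sigma\le\tau$. Let $\psi:[0,\infty)\to[0,\infty)$ be continuous, nonincreasing, positive everywhere, with $\sup\psi\le1$. Given $x_i^0\in C([-\tau,0],\mathbb{R}^d)$, $\{x_i\}$ is the global solution (continuous on $[-\tau,\infty)$, continuously differentiable on $[0,\infty)$) of $\dot x_i(t)=\sum_{j\ne i}a_{ij}(t)(x_j(t-\tau)-x_i(t-\sigma))$ for $t>0$, with $a_{ij}(t)=\frac1{N-1}\psi(|x_i(t-\sigma)-x_j(t-\tau)|)$, and $x_i=x_i^0$ on $[-\tau,0]$. Define $\Delta^0_x:=\max_{i,j\in[N]}\max_{s,t\in[-\tau,0]}|x_i^0(s)-x_j^0(t)|$ and, for $K\in\mathbb{N}$ ($K\ge1$), \[ \Delta^K_x:=\max_{i,j\in[N]}\max_{t\in[-\tau,K\sigma]}\max_{s\in[(K-1)\sigma,K\sigma]}|x_j(t)-x_i(s)|. \] *)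

theory Defs
  imports "HOL-Analysis.Analysis"
begin

definition Delta :: "nat \<Rightarrow> real \<Rightarrow> real \<Rightarrow> (nat \<Rightarrow> real \<Rightarrow> real^'d) \<Rightarrow> nat \<Rightarrow> real" where
  "Delta N \<tau> \<sigma> x K =
    (if K = 0 then
       Sup {norm (x i s - x j t) | i j s t. i \<in> {1..N} \<and> j \<in> {1..N} \<and> s \<in> {-\<tau>..0} \<and> t \<in> {-\<tau>..0}}
     else
       Sup {norm (x j t - x i s) | i j t s. i \<in> {1..N} \<and> j \<in> {1..N} \<and>
              t \<in> {-\<tau>..real K * \<sigma>} \<and> s \<in> {(real K - 1) * \<sigma>..real K * \<sigma>}})"

end

theory Submission
  imports Defs
begin

lemma Delta_ge_pos:
  assumes K: "K \<ge> 1" and i: "i \<in> {1..N}" and j: "j \<in> {1..N}"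
    and t: "t \<in> {-\<tau>..real K * \<sigma>}" and s: "s \<in> {(real K - 1) * \<sigma>..real K * \<sigma>}"
    and B: "\<And>i t. i \<in> {1..N} \<Longrightarrow> t \<in> {-\<tau>..real K * \<sigma>} \<Longrightarrow> norm (x i t) \<le> B"
    and sig: "0 \<le> \<sigma>" and tau: "0 \<le> \<tau>"
  shows "norm (x j t - x i s) \<le> Delta N \<tau> \<sigma> x K"
proof -
  have bdd: "bdd_above {norm (x j t - x i s) | i j t s. i \<in> {1..N} \<and> j \<in> {1..N} \<and>
              t \<in> {-\<tau>..real K * \<sigma>} \<and> s \<in> {(real K - 1) * \<sigma>..real K * \<sigma>}}"
  proof (rule bdd_aboveI[where M="2*B"], clarify)
    fix i j t s assume h: "i \<in> {1..N}" "j \<in> {1..N}" "t \<in> {-\<tau>..real K * \<sigma>}" "s \<in> {(real K - 1) * \<sigma>..real K * \<sigma>}"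
    have "0 \<le> (real K - 1) * \<sigma>" using K sig by simp
    then have "s \<in> {-\<tau>..real K * \<sigma>}" using h(3,4) tau by auto
    then have "norm (x i s) \<le> B" using B h by auto
    moreover have "norm (x j t) \<le> B" using B h by auto
    ultimately show "norm (x j t - x i s) \<le> 2*B"
      by (smt (verit) norm_triangle_ineq4)
  qed
  have "norm (x j t - x i s) \<in> {norm (x j t - x i s) | i j t s. i \<in> {1..N} \<and> j \<in> {1..N} \<and>
              t \<in> {-\<tau>..real K * \<sigma>} \<and> s \<in> {(real K - 1) * \<sigma>..real K * \<sigma>}}"
    using i j t s by blast
  from cSup_upper[OF this bdd] show ?thesis unfolding Delta_def using K by simp
qed

lemma Delta_ge_zero:
  assumes i: "i \<in> {1..N}" and j: "j \<in> {1..N}"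
    and t: "t \<in> {-\<tau>..0}" and s: "s \<in> {-\<tau>..0}"
    and B: "\<And>i t. i \<in> {1..N} \<Longrightarrow> t \<in> {-\<tau>..0} \<Longrightarrow> norm (x i t) \<le> B"
  shows "norm (x i s - x j t) \<le> Delta N \<tau> \<sigma> x 0"
proof -
  have bdd: "bdd_above {norm (x i s - x j t) | i j s t. i \<in> {1..N} \<and> j \<in> {1..N} \<and> s \<in> {-\<tau>..0} \<and> t \<in> {-\<tau>..0}}"
  proof (rule bdd_aboveI[where M="2*B"], clarify)
    fix i j t s assume h: "i \<in> {1..N}" "j \<in> {1..N}" "s \<in> {-\<tau>..0}" "t \<in> {-\<tau>..0}"
    have "norm (x i s) \<le> B" using B h by auto
    moreover have "norm (x j t) \<le> B" using B h by auto
    ultimately show "norm (x i s - x j t) \<le> 2*B"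
      by (smt (verit) norm_triangle_ineq4)
  qed
  have "norm (x i s - x j t) \<in> {norm (x i s - x j t) | i j s t. i \<in> {1..N} \<and> j \<in> {1..N} \<and> s \<in> {-\<tau>..0} \<and> t \<in> {-\<tau>..0}}"
    using i j t s by blast
  from cSup_upper[OF this bdd] show ?thesis unfolding Delta_def by simp
qed

lemma Delta_le_pos:
  assumes K: "K \<ge> 1" and N: "N \<ge> 1" and sig: "0 \<le> \<sigma>" and tau: "0 \<le> \<tau>"
    and M: "\<And>i j t s. i \<in> {1..N} \<Longrightarrow> j \<in> {1..N} \<Longrightarrow> t \<in> {-\<tau>..real K * \<sigma>} \<Longrightarrow>
       s \<in> {(real K - 1) * \<sigma>..real K * \<sigma>} \<Longrightarrow> norm (x j t - x i s) \<le> M"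
  shows "Delta N \<tau> \<sigma> x K \<le> M"
proof -
  have "0 \<le> real K * \<sigma>" using sig by simp
  then have "norm (x 1 (real K * \<sigma>) - x 1 (real K * \<sigma>)) \<in> {norm (x j t - x i s) | i j t s. i \<in> {1..N} \<and> j \<in> {1..N} \<and>
              t \<in> {-\<tau>..real K * \<sigma>} \<and> s \<in> {(real K - 1) * \<sigma>..real K * \<sigma>}}"
  proof -
    have a: "(1::nat) \<in> {1..N}" using N by simp
    have b: "real K * \<sigma> \<in> {-\<tau>..real K * \<sigma>}" using \<open>0 \<le> real K * \<sigma>\<close> tau by simp
    have c: "real K * \<sigma> \<in> {(real K - 1) * \<sigma>..real K * \<sigma>}" using sig by (simp add: algebra_simps)
    show ?thesis using a b c by blast
  qed
  then have ne: "{norm (x j t - x i s) | i j t s. i \<in> {1..N} \<and> j \<in> {1..N} \<and>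
              t \<in> {-\<tau>..real K * \<sigma>} \<and> s \<in> {(real K - 1) * \<sigma>..real K * \<sigma>}} \<noteq> {}" by blast
  have eq: "Delta N \<tau> \<sigma> x K = Sup {norm (x j t - x i s) | i j t s. i \<in> {1..N} \<and> j \<in> {1..N} \<and>
              t \<in> {-\<tau>..real K * \<sigma>} \<and> s \<in> {(real K - 1) * \<sigma>..real K * \<sigma>}}"
    unfolding Delta_def using K by simp
  show ?thesis unfolding eq
  proof (rule cSup_least[OF ne], clarify)
    fix i j t s assume "i \<in> {1..N}" "j \<in> {1..N}" "t \<in> {-\<tau>..real K * \<sigma>}" "s \<in> {(real K - 1) * \<sigma>..real K * \<sigma>}"
    then show "norm (x j t - x i s) \<le> M" by (rule M)
  qed
qed

lemma bound_exists:
  fixes x :: "nat \<Rightarrow> real \<Rightarrow> real^'d" and \<tau> b :: real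
  assumes "\<And>i. i \<in> {1..N} \<Longrightarrow> continuous_on {-\<tau>..} (x i)"
  shows "\<exists>B. \<forall>i\<in>{1..N}. \<forall>t\<in>{-\<tau>..b}. norm (x i t) \<le> B"
proof -
  have "bounded (\<Union>i\<in>{1..N}. x i ` {-\<tau>..b})"
  proof (rule bounded_UN, simp, rule ballI)
    fix i assume i: "i \<in> {1..N}"
    have sub: "{-\<tau>..b} \<subseteq> {-\<tau>..}" by auto
    have "continuous_on {-\<tau>..b} (x i)" by (rule continuous_on_subset[OF assms[OF i] sub])
    then show "bounded (x i ` {-\<tau>..b})"
      by (intro compact_imp_bounded compact_continuous_image) (auto simp: compact_Icc)
  qed
  then obtain B where "\<forall>v\<in>(\<Union>i\<in>{1..N}. x i ` {-\<tau>..b}). norm v \<le> B"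
    unfolding bounded_iff by blast
  then show ?thesis by auto
qed

theorem lemma3p6:
  fixes N :: nat and \<sigma> \<tau> :: real and \<psi> :: "real \<Rightarrow> real"
    and x :: "nat \<Rightarrow> real \<Rightarrow> real^'d" and K :: nat
  assumes N2: "N \<ge> 2"
    and sig: "0 \<le> \<sigma>" "\<sigma> \<le> \<tau>"
    and psi_cont: "continuous_on {0..} \<psi>"
    and psi_mono: "\<And>a b. 0 \<le> a \<Longrightarrow> a \<le> b \<Longrightarrow> \<psi> b \<le> \<psi> a"
    and psi_pos: "\<And>r. 0 \<le> r \<Longrightarrow> 0 < \<psi> r"
    and psi_le1: "\<And>r. 0 \<le> r \<Longrightarrow> \<psi> r \<le> 1"
    and x_cont: "\<And>i. i \<in> {1..N} \<Longrightarrow> continuous_on {-\<tau>..} (x i)"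
    and x_C1: "\<And>i. i \<in> {1..N} \<Longrightarrow> \<exists>x'. continuous_on {0..} x' \<and>
                 (\<forall>t\<ge>0. (x i has_vector_derivative x' t) (at t within {0..}))"
    and x_ode: "\<And>i t. i \<in> {1..N} \<Longrightarrow> t > 0 \<Longrightarrow>
        (x i has_vector_derivative
          (\<Sum>j\<in>{1..N} - {i}. (\<psi> (norm (x i (t - \<sigma>) - x j (t - \<tau>)) ) / real (N - 1))
                               *\<^sub>R (x j (t - \<tau>) - x i (t - \<sigma>)))) (at t)"
    and K1: "K \<ge> 1"
  shows "Delta N \<tau> \<sigma> x K \<le> Delta N \<tau> \<sigma> x 0 + (1 + \<sigma>) * Delta N \<tau> \<sigma> x (K - 1)
           + \<sigma> * (\<Sum>k<K. Delta N \<tau> \<sigma> x k)"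
proof -
  have tau: "0 \<le> \<tau>" using sig by linarith
  have N1: "N \<ge> 1" using N2 by simp
  have bnd: "\<exists>B. \<forall>i\<in>{1..N}. \<forall>t\<in>{-\<tau>..b}. norm (x i t) \<le> B" for b
    by (rule bound_exists[OF x_cont])
  have nonneg: "0 \<le> Delta N \<tau> \<sigma> x k" for k
  proof (cases "k = 0")
    case True
    obtain B where B: "\<forall>i\<in>{1..N}. \<forall>t\<in>{-\<tau>..0}. norm (x i t) \<le> B" using bnd by blast
    have "norm (x 1 0 - x 1 0) \<le> Delta N \<tau> \<sigma> x 0"
      by (rule Delta_ge_zero[where B=B]) (use N1 tau B in auto)
    then show ?thesis using True by simp
  next
    case False
    obtain B where B: "\<forall>i\<in>{1..N}. \<forall>t\<in>{-\<tau>..real k * \<sigma>}. norm (x i t) \<le> B" using bnd by blast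
    have kp: "0 \<le> \<sigma> * real k" using sig by simp
    have "norm (x 1 (real k * \<sigma>) - x 1 (real k * \<sigma>)) \<le> Delta N \<tau> \<sigma> x k"
    proof (rule Delta_ge_pos[where B=B])
      show "real k * \<sigma> \<in> {-\<tau>..real k * \<sigma>}" using kp tau by (simp add: mult.commute)
      show "real k * \<sigma> \<in> {(real k - 1) * \<sigma>..real k * \<sigma>}" using sig by (simp add: algebra_simps)
    qed (use N1 tau sig B False in auto)
    then show ?thesis by simp
  qed
  define D where "D = Delta N \<tau> \<sigma> x (K - 1)"
  define c where "c = real (K - 1) * \<sigma>"
  have c0: "0 \<le> c" unfolding c_def using sig by simp
  have cK: "real K * \<sigma> = c + \<sigma>" unfolding c_def using K1 by (simp add: of_nat_diff algebra_simps)
  have D0: "0 \<le> D" unfolding D_def by (rule nonneg)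
  have key: "norm (x j a - x i b) \<le> D"
    if i: "i \<in> {1..N}" and j: "j \<in> {1..N}" and a: "a \<in> {-\<tau>..c}" and b: "b \<in> {c-\<sigma>..c}" for i j a b
  proof (cases "K - 1 = 0")
    case True
    then have cz: "c = 0" unfolding c_def by simp
    obtain B where B: "\<forall>i\<in>{1..N}. \<forall>t\<in>{-\<tau>..0}. norm (x i t) \<le> B" using bnd by blast
    have "norm (x j a - x i b) \<le> Delta N \<tau> \<sigma> x 0"
      by (rule Delta_ge_zero[where B=B]) (use i j a b cz sig B in auto)
    then show ?thesis unfolding D_def using True by simp
  next
    case False
    obtain B where B: "\<forall>i\<in>{1..N}. \<forall>t\<in>{-\<tau>..real (K-1) * \<sigma>}. norm (x i t) \<le> B" using bnd by blast
    have e: "(real (K - 1) - 1) * \<sigma> = c - \<sigma>" unfolding c_def by (simp add: algebra_simps)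
    show ?thesis unfolding D_def
      by (rule Delta_ge_pos[where B=B]) (use i j a b B False sig tau e in \<open>auto simp: c_def\<close>)
  qed
  have dbound: "norm (\<Sum>j\<in>{1..N} - {i}. (\<psi> (norm (x i (r - \<sigma>) - x j (r - \<tau>)) ) / real (N - 1))
                               *\<^sub>R (x j (r - \<tau>) - x i (r - \<sigma>))) \<le> D"
    if i: "i \<in> {1..N}" and r: "c < r" "r \<le> real K * \<sigma>" for i r
  proof -
    have N1': "0 < real (N - 1)" using N2 by simp
    have "norm (\<Sum>j\<in>{1..N} - {i}. (\<psi> (norm (x i (r - \<sigma>) - x j (r - \<tau>)) ) / real (N - 1))
                               *\<^sub>R (x j (r - \<tau>) - x i (r - \<sigma>)))
        \<le> (\<Sum>j\<in>{1..N} - {i}. norm ((\<psi> (norm (x i (r - \<sigma>) - x j (r - \<tau>)) ) / real (N - 1))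
                               *\<^sub>R (x j (r - \<tau>) - x i (r - \<sigma>))))"
      by (rule norm_sum)
    also have "\<dots> \<le> (\<Sum>j\<in>{1..N} - {i}. D / real (N - 1))"
    proof (rule sum_mono)
      fix j assume j: "j \<in> {1..N} - {i}"
      let ?p = "\<psi> (norm (x i (r - \<sigma>) - x j (r - \<tau>)))"
      have p: "0 < ?p" "?p \<le> 1" using psi_pos psi_le1 by auto
      have nd: "norm (x j (r - \<tau>) - x i (r - \<sigma>)) \<le> D"
        by (rule key) (use i j r sig cK c0 in auto)
      have "norm ((?p / real (N - 1)) *\<^sub>R (x j (r - \<tau>) - x i (r - \<sigma>)))
          = (?p / real (N - 1)) * norm (x j (r - \<tau>) - x i (r - \<sigma>))"
        using p N1' by simp
      also have "\<dots> \<le> (1 / real (N - 1)) * D"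
        by (rule mult_mono) (use p N1' nd D0 in \<open>auto simp: divide_right_mono\<close>)
      finally show "norm ((?p / real (N - 1)) *\<^sub>R (x j (r - \<tau>) - x i (r - \<sigma>))) \<le> D / real (N - 1)"
        by simp
    qed
    also have "\<dots> = D"
    proof -
      have "card ({1..N} - {i}) = N - 1" using i by (simp add: card_Diff_singleton)
      then show ?thesis using N1' by simp
    qed
    finally show ?thesis .
  qed
  have L: "norm (x i u - x i c) \<le> \<sigma> * D" if i: "i \<in> {1..N}" and u: "c \<le> u" "u \<le> real K * \<sigma>" for i u
  proof (cases "u = c")
    case True then show ?thesis using sig D0 by simp
  next
    case False
    then have cu: "c < u" using u by simp
    have sub: "{c..u} \<subseteq> {-\<tau>..}" using c0 tau by auto
    have contf: "continuous_on {c..u} (x i)" by (rule continuous_on_subset[OF x_cont[OF i] sub])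
    obtain \<xi> where \<xi>: "\<xi> \<in> {c<..<u}" and le: "norm (x i u - x i c) \<le>
       norm ((u - c) *\<^sub>R (\<Sum>j\<in>{1..N} - {i}. (\<psi> (norm (x i (\<xi> - \<sigma>) - x j (\<xi> - \<tau>)) ) / real (N - 1))
                               *\<^sub>R (x j (\<xi> - \<tau>) - x i (\<xi> - \<sigma>))))"
    proof -
      have "\<exists>\<xi>\<in>{c<..<u}. norm (x i u - x i c) \<le> norm ((\<lambda>h. h *\<^sub>R (\<Sum>j\<in>{1..N} - {i}. (\<psi> (norm (x i (\<xi> - \<sigma>) - x j (\<xi> - \<tau>)) ) / real (N - 1))
                               *\<^sub>R (x j (\<xi> - \<tau>) - x i (\<xi> - \<sigma>)))) (u - c))"
      proof (rule mvt_general[OF cu contf])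
        fix t assume "c < t" "t < u"
        then have "t > 0" using c0 by simp
        from x_ode[OF i this] show "(x i has_derivative (\<lambda>h. h *\<^sub>R (\<Sum>j\<in>{1..N} - {i}. (\<psi> (norm (x i (t - \<sigma>) - x j (t - \<tau>)) ) / real (N - 1))
                               *\<^sub>R (x j (t - \<tau>) - x i (t - \<sigma>))))) (at t)"
          by (simp add: has_vector_derivative_def)
      qed
      then show ?thesis using that by blast
    qed
    have "norm ((u - c) *\<^sub>R (\<Sum>j\<in>{1..N} - {i}. (\<psi> (norm (x i (\<xi> - \<sigma>) - x j (\<xi> - \<tau>)) ) / real (N - 1))
                               *\<^sub>R (x j (\<xi> - \<tau>) - x i (\<xi> - \<sigma>))))
       = (u - c) * norm (\<Sum>j\<in>{1..N} - {i}. (\<psi> (norm (x i (\<xi> - \<sigma>) - x j (\<xi> - \<tau>)) ) / real (N - 1))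
                               *\<^sub>R (x j (\<xi> - \<tau>) - x i (\<xi> - \<sigma>)))"
      using cu by simp
    also have "\<dots> \<le> \<sigma> * D"
      by (rule mult_mono) (use cu u cK \<xi> dbound[OF i] D0 sig in auto)
    finally show ?thesis using le by simp
  qed
  have main: "Delta N \<tau> \<sigma> x K \<le> (1 + 2 * \<sigma>) * D"
  proof (rule Delta_le_pos[OF K1 N1 sig(1) tau])
    fix i j t s assume i: "i \<in> {1..N}" and j: "j \<in> {1..N}" and t: "t \<in> {-\<tau>..real K * \<sigma>}"
      and s: "s \<in> {(real K - 1) * \<sigma>..real K * \<sigma>}"
    have s': "c \<le> s" "s \<le> real K * \<sigma>" using s K1 unfolding c_def by (auto simp: of_nat_diff)
    have Ls: "norm (x i s - x i c) \<le> \<sigma> * D" by (rule L[OF i s'])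
    show "norm (x j t - x i s) \<le> (1 + 2 * \<sigma>) * D"
    proof (cases "t \<le> c")
      case True
      have "norm (x j t - x i c) \<le> D" by (rule key) (use i j t True sig in auto)
      moreover have "norm (x j t - x i s) \<le> norm (x j t - x i c) + norm (x i s - x i c)"
        by (rule norm_diff_triangle_le[where y="x i c"]) (simp_all add: norm_minus_commute)
      moreover have "0 \<le> \<sigma> * D" using sig D0 by simp
      ultimately show ?thesis using Ls by (simp add: algebra_simps)
    next
      case False
      have Lt: "norm (x j t - x j c) \<le> \<sigma> * D" by (rule L[OF j]) (use False t in auto)
      have m: "norm (x j c - x i c) \<le> D" by (rule key) (use i j c0 tau sig in auto)
      have "norm (x j t - x i s) \<le> norm (x j t - x i c) + norm (x i s - x i c)"
        by (rule norm_diff_triangle_le[where y="x i c"]) (simp_all add: norm_minus_commute)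
      moreover have "norm (x j t - x i c) \<le> norm (x j t - x j c) + norm (x j c - x i c)"
        by (rule norm_diff_triangle_le[where y="x j c"]) simp_all
      ultimately show ?thesis using Ls Lt m by (simp add: algebra_simps)
    qed
  qed
  have sumge: "D \<le> (\<Sum>k<K. Delta N \<tau> \<sigma> x k)"
    unfolding D_def by (rule member_le_sum) (use K1 nonneg in auto)
  have "\<sigma> * D \<le> \<sigma> * (\<Sum>k<K. Delta N \<tau> \<sigma> x k)" using sumge sig by (simp add: mult_left_mono)
  then show ?thesis using main nonneg[of 0] unfolding D_def by (simp add: algebra_simps)
qed

end
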